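(* Let $(X,d^\star)$ be a totally bounded $\star$-metric space. Then for every subset $M\subseteq X$, the $\star$-metric space $(M,d^\star|_{M\times M})$ is totally bounded.
   Context: A $t$-definer is a function $\star:[0,\infty)\times[0,\infty)\to[0,\infty)$ such that for all $a,b,c\ge 0$: $a\star b=b\star a$; $a\star(b\star c)=(a\star b)\star c$; if $a\le b$ then $a\star c\le b\star c$; $a\star 0=a$; and $\star$ is continuous in its first variable with respect to the Euclidean topology. Given a nonempty set $X$ and a $t$-definer $\star$, a $\star$-metric on $X$ is a function $d^\star:X\times X\to[0,\infty)$ such that for all $x,y,z\in X$: $d^\star(x,y)=0$ iff $x=y$; $d^\star(x,y)=d^\star(y,x)$; and $d^\star(x,y)\le d^\star(x,z)\star d^\star(z,y)$; $(X,d^\star)$ is a $\star$-metric space. Put $B_{d^\star}(a,r)=\{x\in X: d^\star(a,x)<r\}$. $(X,d^\star)$ is totally bounded if for every $\epsilon>0$ there is a finite set $F\subseteq X$ with $X=\bigcup_{x\in F}B_{d^\star}(x,\epsilon)$. For a subset $M$, the restriction of $d^\star$ to $M\times M$ is a $\star$-metric on $M$, and total boundedness of $(M,d^\star|_{M\times M})$ uses balls and finite sets within $M$. *)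

theory Defs
  imports Complex_Main
begin

text \<open>A t-definer: a binary operation on [0,\<infinity>), represented as a function
  on real numbers whose behaviour is only constrained on nonnegative arguments.\<close>
definition t_definer :: "(real \<Rightarrow> real \<Rightarrow> real) \<Rightarrow> bool" where
  "t_definer star \<longleftrightarrow>
     (\<forall>a\<ge>0. \<forall>b\<ge>0. star a b \<ge> 0) \<and>
     (\<forall>a\<ge>0. \<forall>b\<ge>0. star a b = star b a) \<and>
     (\<forall>a\<ge>0. \<forall>b\<ge>0. \<forall>c\<ge>0. star a (star b c) = star (star a b) c) \<and>
     (\<forall>a\<ge>0. \<forall>b\<ge>0. \<forall>c\<ge>0. a \<le> b \<longrightarrow> star a c \<le> star b c) \<and>
     (\<forall>a\<ge>0. star a 0 = a) \<and>
     (\<forall>b\<ge>0. continuous_on {0..} (\<lambda>a. star a b))"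

definition star_metric :: "(real \<Rightarrow> real \<Rightarrow> real) \<Rightarrow> 'a set \<Rightarrow> ('a \<Rightarrow> 'a \<Rightarrow> real) \<Rightarrow> bool" where
  "star_metric star X d \<longleftrightarrow>
     X \<noteq> {} \<and>
     (\<forall>x\<in>X. \<forall>y\<in>X. d x y \<ge> 0) \<and>
     (\<forall>x\<in>X. \<forall>y\<in>X. d x y = 0 \<longleftrightarrow> x = y) \<and>
     (\<forall>x\<in>X. \<forall>y\<in>X. d x y = d y x) \<and>
     (\<forall>x\<in>X. \<forall>y\<in>X. \<forall>z\<in>X. d x y \<le> star (d x z) (d z y))"

definition star_ball :: "'a set \<Rightarrow> ('a \<Rightarrow> 'a \<Rightarrow> real) \<Rightarrow> 'a \<Rightarrow> real \<Rightarrow> 'a set" where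
  "star_ball X d a r = {x\<in>X. d a x < r}"

definition star_totally_bounded :: "'a set \<Rightarrow> ('a \<Rightarrow> 'a \<Rightarrow> real) \<Rightarrow> bool" where
  "star_totally_bounded X d \<longleftrightarrow>
     (\<forall>\<epsilon>>0. \<exists>F. finite F \<and> F \<subseteq> X \<and> X = (\<Union>x\<in>F. star_ball X d x \<epsilon>))"

end

theory Submission
  imports Defs
begin

lemma small_delta:
  assumes t: "t_definer star" and e: "(e::real) > 0"
  shows "\<exists>\<delta>>0. star \<delta> \<delta> < e"
proof -
  have sym: "\<And>a b. a\<ge>0 \<Longrightarrow> b\<ge>0 \<Longrightarrow> star a b = star b a"
    and mono: "\<And>a b c. a\<ge>0 \<Longrightarrow> b\<ge>0 \<Longrightarrow> c\<ge>0 \<Longrightarrow> a \<le> b \<Longrightarrow> star a c \<le> star b c"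
    and z: "\<And>a. a\<ge>0 \<Longrightarrow> star a 0 = a"
    and cont: "\<And>b. b\<ge>0 \<Longrightarrow> continuous_on {0..} (\<lambda>a. star a b)"
    using t unfolding t_definer_def by blast+
  let ?b = "e/2"
  have b0: "?b \<ge> 0" using e by simp
  have s0: "star 0 ?b = ?b" using sym[of 0 ?b] z[of ?b] b0 by simp
  have "continuous (at 0 within {0..}) (\<lambda>a. star a ?b)"
    using cont[OF b0] by (simp add: continuous_on_eq_continuous_within)
  then have "\<forall>\<^sub>F x in at 0 within {0..}. dist (star x ?b) (star 0 ?b) < e/2"
    using e unfolding continuous_within tendsto_iff
    by (metis half_gt_zero)
  then have "\<exists>d>0. \<forall>x\<in>{0..}. x \<noteq> 0 \<and> dist x 0 < d \<longrightarrow> dist (star x ?b) (star 0 ?b) < e/2"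
    unfolding eventually_at by blast
  then obtain d1 where d1: "d1 > 0" and
    h: "\<And>x. x > 0 \<Longrightarrow> \<bar>x\<bar> < d1 \<Longrightarrow> \<bar>star x ?b - ?b\<bar> < e/2"
    using s0 by (auto simp: dist_real_def)
  define \<delta> where "\<delta> = min (d1/2) ?b"
  have dp: "\<delta> > 0" using d1 e by (simp add: \<delta>_def)
  have "star \<delta> \<delta> \<le> star (d1/2) \<delta>" using mono[of \<delta> "d1/2" \<delta>] dp by (simp add: \<delta>_def)
  also have "\<dots> = star \<delta> (d1/2)" using sym[of \<delta> "d1/2"] dp d1 by linarith
  also have "\<dots> \<le> star ?b (d1/2)" using mono[of \<delta> ?b "d1/2"] dp d1 by (simp add: \<delta>_def)
  also have "\<dots> = star (d1/2) ?b" using sym[of ?b "d1/2"] d1 e by linarith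
  also have "\<dots> < e" proof -
    have "\<bar>star (d1/2) ?b - ?b\<bar> < e/2" using h[of "d1/2"] d1 by simp
    then show ?thesis by arith
  qed
  finally show ?thesis using dp by blast
qed

theorem theorem3p4:
  fixes star :: "real \<Rightarrow> real \<Rightarrow> real"
    and X :: "'a set" and d :: "'a \<Rightarrow> 'a \<Rightarrow> real"
  assumes "t_definer star"
    and "star_metric star X d"
    and "star_totally_bounded X d"
  shows "\<forall>M. M \<subseteq> X \<longrightarrow> star_totally_bounded M d"
proof (intro allI impI)
  fix M assume MX: "M \<subseteq> X"
  have sym: "\<And>a b. a\<ge>0 \<Longrightarrow> b\<ge>0 \<Longrightarrow> star a b = star b a"
    and mono: "\<And>a b c. a\<ge>0 \<Longrightarrow> b\<ge>0 \<Longrightarrow> c\<ge>0 \<Longrightarrow> a \<le> b \<Longrightarrow> star a c \<le> star b c"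
    using assms(1) unfolding t_definer_def by blast+
  have SM: "X \<noteq> {} \<and>
     (\<forall>x\<in>X. \<forall>y\<in>X. d x y \<ge> 0) \<and>
     (\<forall>x\<in>X. \<forall>y\<in>X. d x y = 0 \<longleftrightarrow> x = y) \<and>
     (\<forall>x\<in>X. \<forall>y\<in>X. d x y = d y x) \<and>
     (\<forall>x\<in>X. \<forall>y\<in>X. \<forall>z\<in>X. d x y \<le> star (d x z) (d z y))"
    using assms(2) unfolding star_metric_def .
  have dnn: "\<And>x y. x\<in>X \<Longrightarrow> y\<in>X \<Longrightarrow> d x y \<ge> 0"
    using SM[THEN conjunct2, THEN conjunct1] by blast
  have dsym: "\<And>x y. x\<in>X \<Longrightarrow> y\<in>X \<Longrightarrow> d x y = d y x"
    using SM[THEN conjunct2, THEN conjunct2, THEN conjunct2, THEN conjunct1] by blast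
  have tri: "\<And>x y z. x\<in>X \<Longrightarrow> y\<in>X \<Longrightarrow> z\<in>X \<Longrightarrow> d x y \<le> star (d x z) (d z y)"
    using SM[THEN conjunct2, THEN conjunct2, THEN conjunct2, THEN conjunct2] by blast
  show "star_totally_bounded M d"
    unfolding star_totally_bounded_def
  proof (intro allI impI)
    fix e :: real assume e: "e > 0"
    obtain \<delta> where dp: "\<delta> > 0" and de: "star \<delta> \<delta> < e"
      using small_delta[OF assms(1) e] by blast
    have TB: "\<forall>\<epsilon>>0. \<exists>F. finite F \<and> F \<subseteq> X \<and> X = (\<Union>x\<in>F. star_ball X d x \<epsilon>)"
      using assms(3) unfolding star_totally_bounded_def .
    obtain F where F0: "finite F \<and> F \<subseteq> X \<and> X = (\<Union>x\<in>F. star_ball X d x \<delta>)"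
      using TB[rule_format, OF dp] by (rule exE)
    note F = F0[THEN conjunct1] F0[THEN conjunct2, THEN conjunct1] F0[THEN conjunct2, THEN conjunct2]
    define G where "G = {x\<in>F. \<exists>m\<in>M. d x m < \<delta>}"
    define c where "c x = (SOME m. m \<in> M \<and> d x m < \<delta>)" for x
    have c: "c x \<in> M \<and> d x (c x) < \<delta>" if xG0: "x \<in> G" for x
    proof -
      obtain m where "m \<in> M \<and> d x m < \<delta>" using xG0 unfolding G_def by blast
      then show ?thesis unfolding c_def by (rule someI)
    qed
    have fin: "finite (c ` G)" using F(1) by (simp add: G_def)
    have sub: "c ` G \<subseteq> M" using c by blast
    have cov: "M = (\<Union>x\<in>c ` G. star_ball M d x e)"
    proof
      show "M \<subseteq> (\<Union>x\<in>c ` G. star_ball M d x e)"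
      proof
        fix y assume y: "y \<in> M"
        then have "y \<in> X" using MX by blast
        then have "y \<in> (\<Union>x\<in>F. star_ball X d x \<delta>)" by (simp only: F(3)[symmetric])
        then obtain x where x: "x \<in> F" "d x y < \<delta>" unfolding star_ball_def by blast
        then have xG: "x \<in> G" using y unfolding G_def by blast
        have xX: "x \<in> X" using x F(2) by blast
        have cX: "c x \<in> X" using c[OF xG] MX by blast
        have yX: "y \<in> X" using y MX by blast
        have "d (c x) y \<le> star (d (c x) x) (d x y)" by (rule tri[OF cX yX xX])
        also have "\<dots> \<le> star \<delta> (d x y)"
          using mono[of "d (c x) x" \<delta> "d x y"] dnn cX xX yX dsym[OF cX xX] c[OF xG] dp by simp
        also have "\<dots> = star (d x y) \<delta>" using sym[of \<delta> "d x y"] dnn[OF xX yX] dp by linarith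
        also have "\<dots> \<le> star \<delta> \<delta>" using mono[of "d x y" \<delta> \<delta>] dnn xX yX dp x by simp
        finally have "d (c x) y < e" using de by simp
        show "y \<in> (\<Union>x\<in>c ` G. star_ball M d x e)"
        proof (rule UN_I)
          show "c x \<in> c ` G" using xG by (rule imageI)
          show "y \<in> star_ball M d (c x) e" unfolding star_ball_def using y \<open>d (c x) y < e\<close> by simp
        qed
      qed
    qed (auto simp: star_ball_def)
    show "\<exists>F. finite F \<and> F \<subseteq> M \<and> M = (\<Union>x\<in>F. star_ball M d x e)"
      by (rule exI[of _ "c ` G"]) (intro conjI fin sub cov)
  qed
qed

end
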